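(* If $k \geq 9$ and $|q - q_k| \leq q_k^{-2k-6}$, then there exists a sequence $(c_j)_{j\ge1} \in 1^k0^{k+4}W_2^\mathbb{N}$ such that $\sum_{j\ge1} c_j q^{-j} = 1$.
   Context: $q_k$ is the unique root in $(1,2)$ of $x^k - x^{k-1} - \cdots - x - 1 = 0$. $W_2 = \{(-1\,0), (0\,{-1}), (00), (01), (10)\}$ is a set of words of length 2 over $\{-1,0,1\}$, and $W_2^\mathbb{N}$ is the set of infinite concatenations of elements of $W_2$. $1^k0^{k+4}W_2^\mathbb{N}$ is the set of sequences in $\{-1,0,1\}^\mathbb{N}$ whose first $2k+4$ entries are $k$ ones followed by $k+4$ zeros and whose tail from index $2k+5$ lies in $W_2^\mathbb{N}$. *)

theory Defs
  imports Complex_Main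
begin

definition qk :: "nat \<Rightarrow> real" where
  "qk k = (THE x. 1 < x \<and> x < 2 \<and> x ^ k - (\<Sum>i<k. x ^ i) = 0)"

definition W2 :: "(int \<times> int) set" where
  "W2 = {(-1, 0), (0, -1), (0, 0), (0, 1), (1, 0)}"

text \<open>Sequences are 0-indexed here: c n is the paper's c_(n+1).
  Membership in 1^k 0^(k+4) W_2^N.\<close>
definition in_pattern :: "nat \<Rightarrow> (nat \<Rightarrow> int) \<Rightarrow> bool" where
  "in_pattern k c \<longleftrightarrow>
     (\<forall>n<k. c n = 1) \<and>
     (\<forall>n. k \<le> n \<and> n < 2 * k + 4 \<longrightarrow> c n = 0) \<and>
     (\<forall>m. (c (2 * k + 4 + 2 * m), c (2 * k + 5 + 2 * m)) \<in> W2)"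

end

theory Submission
  imports Defs
begin


definition P :: "nat \<Rightarrow> real \<Rightarrow> real" where
  "P k x = (\<Sum>i<k. 1 / x ^ (i + 1))"

lemma P_Suc: "x > 0 \<Longrightarrow> P (Suc k) x = (1 + P k x) / x"
proof -
  assume x: "x > 0"
  have "P (Suc k) x = 1 / x + (\<Sum>i<k. 1 / x ^ (Suc i + 1))"
    unfolding P_def by (subst sum.lessThan_Suc_shift) simp
  also have "(\<Sum>i<k. 1 / x ^ (Suc i + 1)) = (\<Sum>i<k. 1 / x ^ (i + 1)) / x"
    unfolding sum_divide_distrib by (rule sum.cong) auto
  finally show ?thesis by (simp add: P_def add_divide_distrib)
qed

lemma P_mult: "x > 0 \<Longrightarrow> (\<Sum>i<k. x ^ i) = x ^ k * P k x"
proof (induction k)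
  case 0 then show ?case by (simp add: P_def)
next
  case (Suc k)
  have "x ^ Suc k * P (Suc k) x = x ^ k * (1 + P k x)"
    using Suc.prems by (simp add: P_Suc)
  also have "\<dots> = x ^ k + (\<Sum>i<k. x ^ i)"
    using Suc by (simp add: algebra_simps)
  finally show ?case by simp
qed

lemma P_closed: "x > 0 \<Longrightarrow> P k x * (x - 1) = 1 - 1 / x ^ k"
proof (induction k)
  case 0 then show ?case by (simp add: P_def)
next
  case (Suc k)
  have "P (Suc k) x = P k x + 1 / x ^ (k+1)" by (simp add: P_def)
  then have "P (Suc k) x * (x - 1) = 1 - 1 / x ^ k + (x - 1) / x ^ (k+1)"
    using Suc by (simp add: algebra_simps)
  also have "\<dots> = 1 - 1 / x ^ Suc k" using Suc.prems by (simp add: field_simps)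
  finally show ?case .
qed

lemma P_anti: assumes "0 < x" "x < y" "k \<ge> 1" shows "P k y < P k x"
proof -
  have "1 / y ^ (i + 1) < 1 / x ^ (i + 1)" for i
  proof -
    have "x ^ (i+1) < y ^ (i+1)" using assms by (intro power_strict_mono) auto
    then show ?thesis using assms by (intro divide_strict_left_mono) auto
  qed
  moreover have "0 \<in> {..<k}" using assms by auto
  then have "{..<k} \<noteq> {}" by blast
  ultimately show ?thesis unfolding P_def by (intro sum_strict_mono) auto
qed

lemma P_199: assumes "k \<ge> 9" shows "P k (199/100) > 1"
proof -
  have "(199/100::real) ^ 9 \<le> (199/100) ^ k" using assms by (intro power_increasing) auto
  moreover have "(100::real) < (199/100) ^ 9" by (simp add: eval_nat_numeral)
  ultimately have h: "100 < (199/100::real) ^ k" by linarith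
  have "P k (199/100) * (99/100) = 1 - 1 / (199/100) ^ k" using P_closed[of "199/100" k] by simp
  moreover have "1 / (199/100::real) ^ k < 1/100" using h by (simp add: field_simps)
  ultimately show ?thesis by linarith
qed

lemma qk_props: assumes "k \<ge> 9"
  shows "199/100 < qk k" "qk k < 2" "P k (qk k) = 1"
proof -
  define F where "F x = x ^ k - (\<Sum>i<k. x ^ i)" for x :: real
  have FP: "F x = x ^ k * (1 - P k x)" if "x > 0" for x
    using P_mult[OF that, of k] by (simp add: F_def algebra_simps)
  have F0: "F x = 0 \<longleftrightarrow> P k x = 1" if "x > 0" for x
    using FP[OF that] that by simp
  have "F (199/100) \<le> 0" using FP[of "199/100"] P_199[OF assms]
    by (simp add: mult_nonneg_nonpos)
  moreover have "0 \<le> F 2" using FP[of 2] P_closed[of 2 k] by (simp add: field_simps)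
  ultimately obtain x where x: "199/100 \<le> x" "x \<le> 2" "F x = 0"
    using IVT[of F "199/100" 0 2] unfolding F_def by (auto intro!: continuous_intros)
  have Px: "P k x = 1" using F0[of x] x by simp
  have "x \<noteq> 2" using Px P_closed[of 2 k] by (auto simp: field_simps)
  with x have x2: "x < 2" by simp
  have uniq: "y = x" if "1 < y" "P k y = 1" for y
  proof (rule ccontr)
    assume "y \<noteq> x"
    then consider "y < x" | "x < y" by linarith
    then show False using P_anti[of y x k] P_anti[of x y k] that Px x assms by cases auto
  qed
  have ex: "\<exists>!y. 1 < y \<and> y < (2::real) \<and> y ^ k - (\<Sum>i<k. y ^ i) = 0"
    apply (rule ex1I[of _ x])
    using x x2 F_def apply simp
    using uniq F0 F_def by force
  have "x \<noteq> 199/100"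
  proof
    assume "x = 199/100"
    then have "P k x = P k (199/100)" by (rule arg_cong)
    then show False using Px P_199[OF assms] by linarith
  qed
  have "qk k = x" unfolding qk_def
    apply (rule the1_equality[OF ex]) using x x2 F_def by simp
  then show "199/100 < qk k" "qk k < 2" "P k (qk k) = 1"
    using Px x2 x \<open>x \<noteq> 199/100\<close> by auto
qed



definition dig :: "real \<Rightarrow> int \<times> int" where
  "dig y = (if 3/2 \<le> y then (1,0) else if 1/2 \<le> y then (0,1) else if -1/2 < y then (0,0)
            else if -3/2 < y then (0,-1) else (-1,0))"

definition dv :: "real \<Rightarrow> int \<times> int \<Rightarrow> real" where
  "dv q p = real_of_int (fst p) * q + real_of_int (snd p)"

primrec Ts :: "real \<Rightarrow> real \<Rightarrow> nat \<Rightarrow> real" where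
  "Ts q t 0 = t"
| "Ts q t (Suc m) = q^2 * Ts q t m - dv q (dig (q^2 * Ts q t m))"

lemma dig_W2: "dig y \<in> W2"
  by (simp add: dig_def W2_def)

lemma W2_bound: "p \<in> W2 \<Longrightarrow> \<bar>fst p\<bar> \<le> 1 \<and> \<bar>snd p\<bar> \<le> 1"
  unfolding W2_def by auto

lemma dig_step0:
  assumes "198/100 \<le> q" "q \<le> 201/100" "Q \<le> 4041/1000" "y \<le> 3/5 * Q" "- (3/5 * Q) \<le> y"
  shows "\<bar>y - dv q (dig y)\<bar> \<le> 3/5"
  using assms unfolding dig_def dv_def by (auto simp: abs_if)

lemma dig_step:
  assumes "198/100 \<le> q" "q \<le> 201/100" "\<bar>t\<bar> \<le> 3/5"
  shows "\<bar>q^2 * t - dv q (dig (q^2 * t))\<bar> \<le> 3/5"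
proof -
  have "q^2 \<le> (201/100)^2" using assms by (intro power_mono) auto
  moreover have "(198/100)^2 \<le> q^2" using assms by (intro power_mono) auto
  ultimately have q2: "q^2 \<le> 4041/1000" "q^2 \<ge> 39204/10000" by (simp_all add: power2_eq_square)
  have "q^2 * t \<le> q^2 * (3/5)" using assms by (intro mult_left_mono) auto
  moreover have "q^2 * (-3/5) \<le> q^2 * t" using assms by (intro mult_left_mono) auto
  ultimately have y: "q^2 * t \<le> 3/5 * q^2" "- (3/5 * q^2) \<le> q^2 * t" by auto
  show ?thesis
    using dig_step0[OF assms(1,2) q2(1) y] .
qed

lemma Ts_bound:
  assumes "198/100 \<le> q" "q \<le> 201/100" "\<bar>t\<bar> \<le> 3/5"
  shows "\<bar>Ts q t m\<bar> \<le> 3/5"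
  by (induction m) (use assms dig_step in auto)

lemma Ts_tele:
  assumes "q > 0"
  shows "t = (\<Sum>m<N. dv q (dig (q^2 * Ts q t m)) / q^(2*m+2)) + Ts q t N / q^(2*N)"
proof (induction N)
  case 0 then show ?case by simp
next
  case (Suc N)
  have "Ts q t N / q^(2*N) = dv q (dig (q^2 * Ts q t N)) / q^(2*N+2) + Ts q t (Suc N) / q^(2 * Suc N)"
    using assms by (simp add: field_simps power_add power2_eq_square)
  then show ?case using Suc by simp
qed

lemma tail_repr:
  assumes "198/100 \<le> q" "q \<le> 201/100" "\<bar>t\<bar> \<le> 3/5"
  shows "(\<lambda>m. dv q (dig (q^2 * Ts q t m)) / q^(2*m+2)) sums t"
proof -
  have q0: "q > 0" using assms by simp
  have lim0: "(\<lambda>N. Ts q t N / q^(2*N)) \<longlonglongrightarrow> 0"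
  proof (rule tendsto_sandwich[of "\<lambda>N. - (3/5 * (1/q^2)^N)" _ _ "\<lambda>N. 3/5 * (1/q^2)^N"])
    have "(\<lambda>N. (1/q^2)^N) \<longlonglongrightarrow> 0"
      by (rule LIMSEQ_power_zero) (use assms mult_strict_mono[of 1 q 1 q] in \<open>simp add: power2_eq_square\<close>)
    then show g: "(\<lambda>N. 3/5 * (1/q^2)^N) \<longlonglongrightarrow> 0"
      using tendsto_mult_right_zero by blast
    show "(\<lambda>N. - (3/5 * (1/q^2)^N)) \<longlonglongrightarrow> 0" using tendsto_minus[OF g] by simp
    have hb: "\<bar>Ts q t N / q^(2*N)\<bar> \<le> 3/5 * (1/q^2)^N" for N
    proof -
      have "\<bar>Ts q t N / q^(2*N)\<bar> = \<bar>Ts q t N\<bar> / q^(2*N)" using q0 by (simp add: abs_divide)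
      also have "\<dots> \<le> 3/5 / q^(2*N)" using Ts_bound[OF assms] q0 by (intro divide_right_mono) auto
      finally show ?thesis by (simp add: power_mult power_one_over)
    qed
    have hb2: "- (3/5 * (1/q^2)^N) \<le> Ts q t N / q^(2*N) \<and> Ts q t N / q^(2*N) \<le> 3/5 * (1/q^2)^N" for N
      using hb[of N] by linarith
    show "\<forall>\<^sub>F N in sequentially. - (3/5 * (1/q^2)^N) \<le> Ts q t N / q^(2*N)"
      using hb2 by (intro always_eventually allI) blast
    show "\<forall>\<^sub>F N in sequentially. Ts q t N / q^(2*N) \<le> 3/5 * (1/q^2)^N"
      using hb2 by (intro always_eventually allI) blast
  qed
  have "(\<lambda>N. t - Ts q t N / q^(2*N)) \<longlonglongrightarrow> t - 0"
    by (intro tendsto_intros lim0)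
  moreover have "t - Ts q t N / q^(2*N) = (\<Sum>m<N. dv q (dig (q^2 * Ts q t m)) / q^(2*m+2))" for N
    using Ts_tele[OF q0, of t N] by linarith
  ultimately show ?thesis unfolding sums_def by simp
qed



lemma pow_diff_bound:
  fixes a b w :: real
  assumes "0 \<le> a" "0 \<le> b" "a \<le> w" "b \<le> w"
  shows "\<bar>a^(Suc n) - b^(Suc n)\<bar> \<le> real (Suc n) * w^n * \<bar>a - b\<bar>"
proof (induction n)
  case 0 then show ?case by simp
next
  case (Suc n)
  have eq: "a^(Suc (Suc n)) - b^(Suc (Suc n)) = a * (a^(Suc n) - b^(Suc n)) + b^(Suc n) * (a - b)"
    by (simp add: algebra_simps)
  have w0: "0 \<le> w" using assms by linarith
  have "\<bar>a * (a^(Suc n) - b^(Suc n))\<bar> \<le> w * (real (Suc n) * w^n * \<bar>a - b\<bar>)"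
    unfolding abs_mult using Suc assms by (intro mult_mono) auto
  moreover have "\<bar>b^(Suc n) * (a - b)\<bar> \<le> w^(Suc n) * \<bar>a - b\<bar>"
  proof -
    have "b^(Suc n) \<le> w^(Suc n)" using assms by (intro power_mono) auto
    then show ?thesis unfolding abs_mult using assms by (intro mult_right_mono) auto
  qed
  ultimately have "\<bar>a^(Suc (Suc n)) - b^(Suc (Suc n))\<bar> \<le> w * (real (Suc n) * w^n * \<bar>a - b\<bar>) + w^(Suc n) * \<bar>a - b\<bar>"
    unfolding eq by (rule order_trans[OF abs_triangle_ineq add_mono])
  also have "\<dots> = real (Suc (Suc n)) * w^(Suc n) * \<bar>a - b\<bar>" by (simp add: algebra_simps)
  finally show ?case .
qed

lemma sum_closed:
  fixes w :: real
  shows "(\<Sum>i<k. real (i+1) * w^i) * (1 - w)^2 = 1 - real (k+1) * w^k + real k * w^(k+1)"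
  by (induction k) (simp_all add: algebra_simps power2_eq_square)

lemma sum_bound:
  fixes w :: real
  assumes "0 \<le> w" "w < 1"
  shows "(\<Sum>i<k. real (i+1) * w^i) \<le> 1 / (1 - w)^2"
proof -
  have "real k * w^(k+1) \<le> real (k+1) * w^k"
  proof -
    have "real k * w^(k+1) = (real k * w) * w^k" by (simp add: algebra_simps)
    also have "\<dots> \<le> real (k+1) * w^k" using assms mult_left_le[of w "real k"] by (intro mult_right_mono) auto
    finally show ?thesis .
  qed
  then have "(\<Sum>i<k. real (i+1) * w^i) * (1 - w)^2 \<le> 1" using sum_closed[of w k] by linarith
  moreover have "(1 - w)^2 > 0" using assms by simp
  ultimately show ?thesis by (simp add: field_simps)
qed



lemma est:
  assumes k: "k \<ge> 9" and hq: "\<bar>q - qk k\<bar> \<le> 1 / qk k ^ (2*k+6)"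
  shows "198/100 \<le> q" "q \<le> 201/100" "\<bar>(1 - P k q) * q^(2*k+4)\<bar> \<le> 3/5"
proof -
  define x where "x = qk k"
  define d where "d = 1 / x ^ (2*k+6)"
  note xp = qk_props[OF k, folded x_def]
  have x0: "x > 0" using xp by simp
  have "(199/100::real)^24 \<le> x^24" using xp by (intro power_mono) auto
  also have "x^24 \<le> x^(2*k+6)" using xp k by (intro power_increasing) auto
  finally have "100 \<le> x^(2*k+6)" by (simp add: eval_nat_numeral) 
  then have d1: "d \<le> 1/100" unfolding d_def by (simp add: field_simps)
  have hq': "\<bar>q - x\<bar> \<le> d" using hq unfolding x_def d_def .
  show q1: "198/100 \<le> q" "q \<le> 201/100" using hq' d1 xp by auto
  have q0: "q > 0" using q1 by simp
  define w :: real where "w = 100/198"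
  have wx: "1/x \<le> w" "1/q \<le> w" unfolding w_def using xp q1 by (simp_all add: field_simps)
  have "\<bar>1 - P k q\<bar> = \<bar>P k x - P k q\<bar>" using xp by simp
  also have "\<dots> = \<bar>\<Sum>i<k. (1/x)^(Suc i) - (1/q)^(Suc i)\<bar>"
    unfolding P_def by (simp add: sum_subtractf power_one_over)
  also have "\<dots> \<le> (\<Sum>i<k. \<bar>(1/x)^(Suc i) - (1/q)^(Suc i)\<bar>)" by (rule sum_abs)
  also have "\<dots> \<le> (\<Sum>i<k. real (Suc i) * w^i * \<bar>1/x - 1/q\<bar>)"
    using x0 q0 wx by (intro sum_mono pow_diff_bound) auto
  also have "\<dots> = (\<Sum>i<k. real (i+1) * w^i) * \<bar>1/x - 1/q\<bar>"
    by (simp add: sum_distrib_right)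
  also have "\<dots> \<le> 1 / (1 - w)^2 * \<bar>1/x - 1/q\<bar>"
    by (intro mult_right_mono sum_bound) (auto simp: w_def)
  also have "1 / (1 - w)^2 = (198/98)^2" by (simp add: w_def power2_eq_square)
  finally have b1: "\<bar>1 - P k q\<bar> \<le> (198/98)^2 * \<bar>1/x - 1/q\<bar>" .
  have "\<bar>1/x - 1/q\<bar> = \<bar>q - x\<bar> / (x * q)" using x0 q0 by (simp add: field_simps abs_divide)
  also have "\<dots> \<le> d / (x * q)" using hq' x0 q0 by (intro divide_right_mono) auto
  finally have b2: "\<bar>1/x - 1/q\<bar> \<le> d / (x * q)" .
  define n where "n = 2*k+3"
  have "1 + real n * (x - 1) \<le> (1 + (x - 1))^n" by (rule Bernoulli_inequality) (use xp in auto)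
  moreover have "real n * (99/100) \<le> real n * (x - 1)" using xp by (intro mult_left_mono) auto
  ultimately have nb: "real n * (99/100) \<le> x^n" by simp
  have "1 + real n * ((x - q)/q) \<le> (1 + (x - q)/q)^n"
    by (rule Bernoulli_inequality) (use q0 xp in \<open>simp add: field_simps\<close>)
  also have "1 + (x - q)/q = x/q" using q0 by (simp add: field_simps)
  finally have bern: "1 + real n * ((x - q)/q) \<le> (x/q)^n" .
  have "real n * d = real n / (x^n * x^3)" unfolding d_def n_def by (simp add: power_add)
  also have "\<dots> \<le> (x^n * (100/99)) / (x^n * x^3)"
    using nb xp by (intro divide_right_mono) (auto simp: field_simps)
  also have "\<dots> = (100/99) / x^3" using x0 by simp
  also have "\<dots> \<le> (100/99) / (199/100)^3" using xp by (intro divide_left_mono power_mono) auto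
  finally have nd: "real n * d \<le> (100/99) / (199/100)^3" .
  have "real n * ((x - q)/q) \<ge> - (real n * d / q)"
  proof -
    have "x - q \<ge> -d" using hq' by linarith
    then have "(x - q)/q \<ge> -d/q" using q0 by (intro divide_right_mono) auto
    then have "real n * (-d/q) \<le> real n * ((x - q)/q)" by (intro mult_left_mono) auto
    then show ?thesis by simp
  qed
  moreover have "real n * d / q \<le> ((100/99) / (199/100)^3) / (198/100)"
    using nd q1 q0 by (intro frac_le) auto
  ultimately have "(x/q)^n \<ge> 9/10" using bern by (simp add: eval_nat_numeral)
  then have qn: "q^n \<le> (10/9) * x^n" using q0 by (simp add: power_divide field_simps)
  have "\<bar>(1 - P k q) * q^(2*k+4)\<bar> = \<bar>1 - P k q\<bar> * q^(2*k+4)" using q0 by (simp add: abs_mult)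
  also have "\<dots> \<le> (198/98)^2 * (d / (x * q)) * q^(2*k+4)"
  proof (intro mult_right_mono)
    have "(198/98)^2 * \<bar>1/x - 1/q\<bar> \<le> (198/98)^2 * (d / (x * q))"
      using b2 by (intro mult_left_mono) auto
    then show "\<bar>1 - P k q\<bar> \<le> (198/98)^2 * (d / (x * q))" using b1 by linarith
  qed (use q0 in auto)
  also have "\<dots> = (198/98)^2 * q^n / (x^n * x^4)"
    unfolding d_def n_def using x0 q0 by (simp add: field_simps power_add eval_nat_numeral)
  also have "\<dots> \<le> (198/98)^2 * ((10/9) * x^n) / (x^n * x^4)"
    using qn x0 by (intro divide_right_mono mult_left_mono) auto
  also have "\<dots> = (198/98)^2 * (10/9) / x^4" using x0 by simp
  also have "\<dots> \<le> (198/98)^2 * (10/9) / (199/100)^4" using xp by (intro divide_left_mono power_mono) auto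
  also have "\<dots> \<le> 3/5" by (simp add: eval_nat_numeral)
  finally show "\<bar>(1 - P k q) * q^(2*k+4)\<bar> \<le> 3/5" .
qed



theorem lemma4p1:
  fixes k :: nat and q :: real
  assumes "k \<ge> 9"
    and "\<bar>q - qk k\<bar> \<le> qk k powi (- (2 * int k + 6))"
  shows "\<exists>c. in_pattern k c \<and> (\<lambda>n. real_of_int (c n) / q ^ (n + 1)) sums 1"
proof -
  have "qk k powi (- (2 * int k + 6)) = 1 / qk k ^ (2*k+6)"
  proof -
    have "- (2 * int k + 6) = - int (2*k+6)" by simp
    then show ?thesis by (simp only: power_int_minus_divide power_int_of_nat)
  qed
  then have hq: "\<bar>q - qk k\<bar> \<le> 1 / qk k ^ (2*k+6)" using assms(2) by simp
  note es = est[OF assms(1) hq]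
  define t where "t = (1 - P k q) * q^(2*k+4)"
  have t: "\<bar>t\<bar> \<le> 3/5" using es(3) unfolding t_def .
  have q0: "q > 0" using es by simp
  define e where "e m = dig (q^2 * Ts q t m)" for m
  define c where "c n = (if n < k then 1 else if n < 2*k+4 then 0 else
      if even (n - (2*k+4)) then fst (e ((n - (2*k+4)) div 2)) else snd (e ((n - (2*k+4)) div 2)))" for n
  have eW: "e m \<in> W2" for m unfolding e_def by (rule dig_W2)
  have c_even: "c (2*k+4+2*m) = fst (e m)" for m unfolding c_def by simp
  have c_odd: "c (2*k+5+2*m) = snd (e m)" for m
  proof -
    have "2*k+5+2*m - (2*k+4) = Suc (2*m)" by simp
    then show ?thesis unfolding c_def by simp
  qed
  have pat: "in_pattern k c"
    unfolding in_pattern_def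
  proof (intro conjI allI impI)
    show "c n = 1" if "n < k" for n using that by (simp add: c_def)
    show "c n = 0" if "k \<le> n \<and> n < 2 * k + 4" for n using that by (simp add: c_def)
    show "(c (2 * k + 4 + 2 * m), c (2 * k + 5 + 2 * m)) \<in> W2" for m
      unfolding c_even c_odd using eW[of m] by simp
  qed
  define f where "f n = real_of_int (c n) / q ^ (n + 1)" for n
  have cb: "\<bar>c n\<bar> \<le> 1" for n
  proof -
    have b: "\<bar>fst (e m)\<bar> \<le> 1" "\<bar>snd (e m)\<bar> \<le> 1" for m
      using W2_bound[OF eW[of m]] by auto
    define M where "M = (n - (2*k+4)) div 2"
    have "c n \<in> {1, 0, fst (e M), snd (e M)}" unfolding c_def M_def by auto
    then show ?thesis using b[of M] by auto
  qed
  have sf: "summable f"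
  proof (rule summable_comparison_test'[where N=0])
    show "summable (\<lambda>n. (1/q) * (1/q)^n)"
      using es by (intro summable_mult summable_geometric) auto
    fix n :: nat
    have "norm (f n) = \<bar>real_of_int (c n)\<bar> / q^(n+1)" unfolding f_def using q0 by (simp add: abs_divide)
    also have "\<dots> \<le> 1 / q^(n+1)" using cb[of n] q0 by (intro divide_right_mono) auto
    also have "\<dots> = (1/q) * (1/q)^n" by (simp add: power_one_over)
    finally show "norm (f n) \<le> (1/q) * (1/q)^n" .
  qed
  define g where "g i = f (i + (2*k+4))" for i
  have sg: "summable g" unfolding g_def using sf by (simp add: summable_iff_shift)
  have grp: "(\<lambda>m. sum g {m*2..<m*2+2}) sums suminf g"
    using sums_group[OF summable_sums[OF sg], of 2] by simp
  have geq: "sum g {m*2..<m*2+2} = dv q (e m) / q^(2*m+2) / q^(2*k+4)" for m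
  proof -
    have "sum g {m*2..<m*2+2} = g (2*m) + g (2*m+1)"
      by (simp add: numeral_2_eq_2 mult.commute)
    also have "g (2*m) = real_of_int (fst (e m)) / q^(2*m+2*k+5)"
      unfolding g_def f_def using c_even[of m] by (simp add: add.commute add.left_commute)
    also have "g (2*m+1) = real_of_int (snd (e m)) / q^(2*m+2*k+6)"
      unfolding g_def f_def using c_odd[of m] by (simp add: add.commute add.left_commute)
    also have "real_of_int (fst (e m)) / q^(2*m+2*k+5) + real_of_int (snd (e m)) / q^(2*m+2*k+6)
        = dv q (e m) / q^(2*m+2) / q^(2*k+4)"
    proof -
      have p1: "q^(2*m+2*k+6) = q^(2*m+2*k+5) * q"
        using power_Suc2[of q "2*m+2*k+5"] by (simp add: numeral_eq_Suc)
      have "2*m+2+(2*k+4) = Suc (2*m+2*k+5)" by simp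
      then have p2: "q^(2*m+2) * q^(2*k+4) = q^(2*m+2*k+5) * q"
        by (simp only: power_add[symmetric] power_Suc2)
      have Q: "q^(2*m+2*k+5) > 0" using q0 by simp
      have aux: "a/Q + b/(Q*q) = (a*q+b)/(Q*q)" if "Q > 0" for a b Q :: real
        using that q0 by (simp add: field_simps)
      show ?thesis unfolding dv_def p1 divide_divide_eq_left p2 using aux[OF Q] by simp
    qed
    finally show ?thesis .
  qed
  have "(\<lambda>m. dv q (e m) / q^(2*m+2)) sums t"
    unfolding e_def by (rule tail_repr[OF es(1,2) t])
  then have "(\<lambda>m. dv q (e m) / q^(2*m+2) / q^(2*k+4)) sums (t / q^(2*k+4))"
    by (rule sums_divide)
  then have "suminf g = t / q^(2*k+4)" using grp unfolding geq by (rule sums_unique2[symmetric])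
  then have "g sums (t / q^(2*k+4))" using summable_sums[OF sg] by simp
  then have fs: "f sums (t / q^(2*k+4) + (\<Sum>i<2*k+4. f i))"
    unfolding g_def by (simp add: sums_iff_shift)
  have init: "j \<le> k + 4 \<Longrightarrow> (\<Sum>i<k+j. f i) = P k q" for j
  proof (induction j)
    case 0
    show ?case unfolding P_def f_def c_def by (intro sum.cong) auto
  next
    case (Suc j)
    then have "f (k+j) = 0" unfolding f_def c_def by auto
    then show ?case using Suc by simp
  qed
  have e24: "{..<2*k+4} = {..<k+(k+4)}" by (intro arg_cong[where f=lessThan]) simp
  have s1: "(\<Sum>i<2*k+4. f i) = P k q" unfolding e24 by (rule init) simp
  have s2: "t / q^(2*k+4) = 1 - P k q" unfolding t_def using q0 by simp
  from fs have "f sums (1 - P k q + P k q)" by (simp only: s1 s2)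
  then have "f sums 1" by simp
  then show ?thesis using pat unfolding f_def by blast
qed

end
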